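(* Let $\mu$ be a centered probability measure on a bounded Borel set $\Lambda\subset\mathbb{R}$ with $\Lambda$ containing more than one point (equivalently $\mu\neq\delta_0$). If $0<\beta<\beta'$, then $\gamma_\beta(s)<\gamma_{\beta'}(s)$ for all $s>0$.
   Context: Let $p\ge2$, $\xi(s)=s^p/2$, $B_t$ a standard Brownian motion, $Z(a,t)=\exp(aB_t-a^2t/2)$, and for $b\ge0$, $s\ge0$, $$\gamma_b(s)=\mathbb{E}\Big[\frac{(\int aZ(a,b\xi'(s))\mu(da))^2}{\int Z(a,b\xi'(s))\mu(da)}\Big].$$ *)

theory Defs
  imports "HOL-Probability.Probability"
begin

definition xi :: "real \<Rightarrow> real \<Rightarrow> real" where
  "xi p s = s powr p / 2"

definition xi' :: "real \<Rightarrow> real \<Rightarrow> real" where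
  "xi' p s = p * s powr (p - 1) / 2"

(* Z(a,t) evaluated at B_t = sqrt t * x, where x is a standard Gaussian sample *)
definition Zg :: "real \<Rightarrow> real \<Rightarrow> real \<Rightarrow> real" where
  "Zg a t x = exp (a * (sqrt t * x) - a\<^sup>2 * t / 2)"

(* gamma_b(s) = E[(int a Z(a,t) mu(da))^2 / int Z(a,t) mu(da)], t = b xi'(s);
   since B_t ~ sqrt t * N(0,1), the expectation is a Gaussian integral. *)
definition gamma :: "real measure \<Rightarrow> real \<Rightarrow> real \<Rightarrow> real \<Rightarrow> real" where
  "gamma \<mu> p b s =
     (let t = b * xi' p s in
      \<integral>x. ((\<integral>a. a * Zg a t x \<partial>\<mu>)\<^sup>2 / (\<integral>a. Zg a t x \<partial>\<mu>)) * std_normal_density x \<partial>lborel)"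

end

theory Submission
  imports Defs
begin

definition Kn :: "real \<Rightarrow> real \<Rightarrow> real \<Rightarrow> real" where
  "Kn v y a = exp (-(y - a)\<^sup>2 / (2 * v)) / sqrt (2 * pi * v)"

lemma Kn_normal: "0 < v \<Longrightarrow> Kn v y a = normal_density a (sqrt v) y"
  by (simp add: Kn_def normal_density_def)

lemma measurable_Kn[measurable]:
  "f \<in> borel_measurable M \<Longrightarrow> g \<in> borel_measurable M \<Longrightarrow> (\<lambda>x. Kn v (f x) (g x)) \<in> borel_measurable M"
  unfolding Kn_def by (measurable; simp)

lemma Kn_pos: "0 < v \<Longrightarrow> 0 < Kn v y a"
  by (simp add: Kn_def)

lemma Kn_le: "0 < v \<Longrightarrow> Kn v y a \<le> 1 / sqrt (2 * pi * v)"
  unfolding Kn_def by (auto simp: divide_right_mono)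

lemma Kn_integrable: "integrable lborel (\<lambda>y. Kn v y a)" if "0 < v"
  using that by (simp add: Kn_normal)

lemma Kn_integral: "(\<integral>y. Kn v y a \<partial>lborel) = 1" if "0 < v"
  using that by (simp add: Kn_normal)

lemma Kn_sym: "Kn v y a = Kn v a y"
  by (simp add: Kn_def power2_commute)

lemma Kn_conv:
  assumes "0 < v" "0 < w"
  shows "(\<integral>z. Kn v z a * Kn w y z \<partial>lborel) = Kn (v + w) y a"
proof -
  have "(\<integral>\<^sup>+z. ennreal (Kn v z a * Kn w y z) \<partial>lborel)
      = (\<integral>\<^sup>+u. ennreal (Kn v (a + 1 * u) a * Kn w y (a + 1 * u)) \<partial>lborel)"
    using nn_integral_real_affine[of "\<lambda>z. ennreal (Kn v z a * Kn w y z)" 1 a] by simp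
  also have "\<dots> = (\<integral>\<^sup>+u. ennreal (normal_density 0 (sqrt w) ((y - a) - u) * normal_density 0 (sqrt v) u) \<partial>lborel)"
    using assms by (intro nn_integral_cong) (simp add: Kn_normal normal_density_def algebra_simps)
  also have "\<dots> = normal_density 0 (sqrt ((sqrt w)\<^sup>2 + (sqrt v)\<^sup>2)) (y - a)"
    using conv_normal_density_zero_mean[of "sqrt w" "sqrt v"] assms by (simp add: fun_eq_iff)
  also have "\<dots> = Kn (v + w) y a"
    using assms by (simp add: Kn_normal normal_density_def algebra_simps)
  finally have *: "(\<integral>\<^sup>+z. ennreal (Kn v z a * Kn w y z) \<partial>lborel) = Kn (v + w) y a" .
  have "(\<integral>z. Kn v z a * Kn w y z \<partial>lborel) = enn2real (\<integral>\<^sup>+z. ennreal (Kn v z a * Kn w y z) \<partial>lborel)"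
    using assms by (intro integral_eq_nn_integral) (auto intro!: AE_I2 mult_nonneg_nonneg less_imp_le Kn_pos mult_pos_pos)
  then show ?thesis using * assms by (simp add: less_imp_le Kn_pos)
qed

lemma Kn_nonneg: "0 < v \<Longrightarrow> 0 \<le> Kn v y a"
  using Kn_pos[of v y a] by simp

lemma AE_lborel_ex: assumes "AE x in lborel. P x" shows "\<exists>x::real. P x"
proof (rule ccontr)
  assume "\<not> (\<exists>x. P x)"
  from assms obtain N where N: "{x \<in> space lborel. \<not> P x} \<subseteq> N" "N \<in> null_sets lborel"
    using assms unfolding eventually_ae_filter by auto
  then have "UNIV \<subseteq> N" using \<open>\<not> (\<exists>x. P x)\<close> by auto
  then have "emeasure lborel (UNIV::real set) \<le> emeasure lborel N"
    using N(2) by (intro emeasure_mono) auto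
  then show False using null_setsD1[OF N(2)] by simp
qed

locale Lset = prob_space M for M :: "real measure" +
  fixes R :: real
  assumes sets_M[measurable_cong]: "sets M = sets borel"
    and bnd: "AE a in M. \<bar>a\<bar> \<le> R"
begin

definition "P v y = (\<integral>a. Kn v y a \<partial>M)"
definition "Mn v y = (\<integral>a. a * Kn v y a \<partial>M)"
definition "q v y = (Mn v y)\<^sup>2 / P v y"
definition "G v = (\<integral>y. q v y \<partial>lborel)"

lemma R_nonneg: "0 \<le> R"
proof -
  have "AE a in M. 0 \<le> R" using bnd by eventually_elim auto
  then show ?thesis by simp
qed

lemma FubK:
  assumes v: "0 < v" and g[measurable]: "g \<in> borel_measurable M" and gB: "AE a in M. \<bar>g a\<bar> \<le> B"
    and phi[measurable]: "phi \<in> borel_measurable borel" and phiC: "\<And>z. \<bar>phi z\<bar> \<le> C"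
  shows "integrable lborel (\<lambda>z. (\<integral>a. g a * Kn v z a \<partial>M) * phi z)"
    and "(\<integral>z. (\<integral>a. g a * Kn v z a \<partial>M) * phi z \<partial>lborel) = (\<integral>a. g a * (\<integral>z. Kn v z a * phi z \<partial>lborel) \<partial>M)"
proof -
  interpret PS: pair_sigma_finite M lborel ..
  interpret QS: pair_sigma_finite lborel M ..
  have C0: "0 \<le> C" using phiC[of 0] by linarith
  have intz: "integrable lborel (\<lambda>z. Kn v z a * phi z)" for a
  proof (rule Bochner_Integration.integrable_bound[OF integrable_mult_right[OF Kn_integrable[OF v], of C a]])
    show "AE z in lborel. norm (Kn v z a * phi z) \<le> norm (C * Kn v z a)"
      using phiC Kn_nonneg[OF v] C0
      by (auto intro!: AE_I2 simp: abs_mult mult.commute[of C] mult_left_mono)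
  qed measurable
  have fm[measurable]: "(\<lambda>(a, z). g a * Kn v z a * phi z) \<in> borel_measurable (M \<Otimes>\<^sub>M lborel)"
    by measurable
  have "integrable (M \<Otimes>\<^sub>M lborel) (\<lambda>(a, z). g a * Kn v z a * phi z)"
  proof (rule PS.Fubini_integrable)
    show "AE a in M. integrable lborel (\<lambda>z. case (a, z) of (a, z) \<Rightarrow> g a * Kn v z a * phi z)"
      using intz by (simp add: mult.assoc)
    show "integrable M (\<lambda>a. \<integral>z. norm (case (a, z) of (a, z) \<Rightarrow> g a * Kn v z a * phi z) \<partial>lborel)"
    proof (rule integrable_const_bound[where B="B * C"])
      show "AE a in M. norm (\<integral>z. norm (case (a, z) of (a, z) \<Rightarrow> g a * Kn v z a * phi z) \<partial>lborel) \<le> B * C"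
        using gB
      proof eventually_elim
        case (elim a)
        have "(\<integral>z. norm (g a * Kn v z a * phi z) \<partial>lborel) \<le> (\<integral>z. \<bar>g a\<bar> * C * Kn v z a \<partial>lborel)"
        proof (rule integral_mono)
          show "integrable lborel (\<lambda>z. norm (g a * Kn v z a * phi z))"
            using integrable_abs[OF intz[of a]] by (simp add: mult.assoc abs_mult)
          show "integrable lborel (\<lambda>z. \<bar>g a\<bar> * C * Kn v z a)"
            using Kn_integrable[OF v] by simp
          show "norm (g a * Kn v z a * phi z) \<le> \<bar>g a\<bar> * C * Kn v z a" for z
            using mult_left_mono[OF mult_right_mono[OF phiC[of z] Kn_nonneg[OF v, of z a]], of "\<bar>g a\<bar>"]
            by (simp add: abs_mult ac_simps abs_of_nonneg[OF Kn_nonneg[OF v]])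
        qed
        also have "\<dots> = \<bar>g a\<bar> * C" using Kn_integral[OF v] by simp
        also have "\<dots> \<le> B * C" using elim C0 by (simp add: mult_right_mono)
        finally show ?case by (simp add: integral_nonneg_AE)
      qed
    qed measurable
  qed measurable
  note int = this
  have "integrable lborel (\<lambda>z. \<integral>a. g a * Kn v z a * phi z \<partial>M)"
    using QS.integrable_fst'[OF PS.integrable_product_swap[OF int]] by (simp add: case_prod_beta)
  then show "integrable lborel (\<lambda>z. (\<integral>a. g a * Kn v z a \<partial>M) * phi z)"
    by simp
  have "(\<integral>z. (\<integral>a. g a * Kn v z a \<partial>M) * phi z \<partial>lborel) = (\<integral>z. (\<integral>a. g a * Kn v z a * phi z \<partial>M) \<partial>lborel)"
    by simp
  also have "\<dots> = (\<integral>a. (\<integral>z. g a * Kn v z a * phi z \<partial>lborel) \<partial>M)"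
    using PS.Fubini_integral[of "\<lambda>a z. g a * Kn v z a * phi z"] int by simp
  also have "\<dots> = (\<integral>a. g a * (\<integral>z. Kn v z a * phi z \<partial>lborel) \<partial>M)"
    by (simp add: mult.assoc)
  finally show "(\<integral>z. (\<integral>a. g a * Kn v z a \<partial>M) * phi z \<partial>lborel) = (\<integral>a. g a * (\<integral>z. Kn v z a * phi z \<partial>lborel) \<partial>M)" .
qed

lemma Kn_abs: "0 < v \<Longrightarrow> \<bar>Kn v y a\<bar> = Kn v y a"
  using Kn_nonneg by (simp add: abs_of_nonneg)

lemma intM:
  assumes v: "0 < v" and g[measurable]: "g \<in> borel_measurable M" and gB: "AE a in M. \<bar>g a\<bar> \<le> B"
  shows "integrable M (\<lambda>a. g a * Kn v y a)"
proof (rule integrable_const_bound[where B="B * (1 / sqrt (2 * pi * v))"])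
  show "AE a in M. norm (g a * Kn v y a) \<le> B * (1 / sqrt (2 * pi * v))"
    using gB
  proof eventually_elim
    case (elim a)
    then show ?case
      using mult_mono[OF elim Kn_le[OF v, of y a]] Kn_nonneg[OF v, of y a]
      by (simp add: abs_mult Kn_abs[OF v])
  qed
qed measurable

lemma intM1: "0 < v \<Longrightarrow> integrable M (\<lambda>a. Kn v y a)"
  using intM[of v "\<lambda>_. 1" 1 y] by simp

lemma intMa: "0 < v \<Longrightarrow> integrable M (\<lambda>a. a * Kn v y a)"
  using intM[of v "\<lambda>a. a" R y] bnd by simp

lemma P_nonneg: "0 < v \<Longrightarrow> 0 \<le> P v y"
  unfolding P_def by (intro integral_nonneg_AE) (simp add: Kn_nonneg)

lemma P_pos: assumes v: "0 < v" shows "0 < P v y"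
proof -
  have "P v y \<noteq> 0"
  proof
    assume "P v y = 0"
    then have "AE a in M. Kn v y a = 0"
      using integral_nonneg_eq_0_iff_AE[OF intM1[OF v]] Kn_nonneg[OF v] by (simp add: P_def)
    then show False using Kn_pos[OF v] by (simp add: less_imp_neq[symmetric])
  qed
  then show ?thesis using P_nonneg[OF v, of y] by simp
qed

lemma P_le: assumes v: "0 < v" shows "P v y \<le> 1 / sqrt (2 * pi * v)"
proof -
  have "P v y \<le> (\<integral>a. 1 / sqrt (2 * pi * v) \<partial>M)"
    unfolding P_def by (intro integral_mono intM1 v Kn_le) simp
  then show ?thesis by (simp add: prob_space)
qed

lemma Mn_bound: assumes v: "0 < v" shows "\<bar>Mn v y\<bar> \<le> R * P v y"
proof -
  have "\<bar>Mn v y\<bar> \<le> (\<integral>a. \<bar>a * Kn v y a\<bar> \<partial>M)"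
    unfolding Mn_def by (rule integral_abs_bound)
  also have "\<dots> \<le> (\<integral>a. R * Kn v y a \<partial>M)"
  proof (rule integral_mono_AE)
    show "integrable M (\<lambda>a. \<bar>a * Kn v y a\<bar>)" using intMa[OF v] by simp
    show "integrable M (\<lambda>a. R * Kn v y a)" using intM1[OF v] by simp
    show "AE a in M. \<bar>a * Kn v y a\<bar> \<le> R * Kn v y a"
      using bnd by eventually_elim (simp add: abs_mult Kn_abs[OF v] mult_right_mono Kn_nonneg[OF v])
  qed
  also have "\<dots> = R * P v y" by (simp add: P_def)
  finally show ?thesis .
qed

lemma meas_P[measurable]: "P v \<in> borel_measurable borel"
  unfolding P_def[abs_def] by measurable

lemma meas_Mn[measurable]: "Mn v \<in> borel_measurable borel"
  unfolding Mn_def[abs_def] by measurable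

lemma meas_q[measurable]: "q v \<in> borel_measurable borel"
  unfolding q_def[abs_def] by measurable

lemma q_nonneg: "0 < v \<Longrightarrow> 0 \<le> q v y"
  unfolding q_def using P_pos[of v y] by simp

lemma q_le: assumes v: "0 < v" shows "q v y \<le> R\<^sup>2 * P v y"
proof -
  have p: "0 < P v y" by (rule P_pos[OF v])
  have "(Mn v y)\<^sup>2 \<le> (R * P v y)\<^sup>2"
    using power_mono[OF Mn_bound[OF v, of y] abs_ge_zero, of 2] by simp
  then have "q v y \<le> (R * P v y)\<^sup>2 / P v y"
    unfolding q_def using p by (simp add: divide_right_mono)
  also have "\<dots> = R\<^sup>2 * P v y" using p by (simp add: power2_eq_square)
  finally show ?thesis .
qed

lemma P_int: assumes v: "0 < v" shows "integrable lborel (P v)" and "(\<integral>z. P v z \<partial>lborel) = 1"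
proof -
  have gm: "(\<lambda>_. 1::real) \<in> borel_measurable M" by simp
  have gB: "AE a in M. \<bar>(\<lambda>_. 1::real) a\<bar> \<le> 1" by simp
  have phim: "(\<lambda>_. 1::real) \<in> borel_measurable borel" by simp
  have phiC: "\<bar>(\<lambda>_. 1::real) z\<bar> \<le> 1" for z by simp
  note F = FubK[OF v gm gB phim phiC]
  have e: "(\<lambda>z. (\<integral>a. 1 * Kn v z a \<partial>M) * 1) = P v" unfolding P_def by simp
  show "integrable lborel (P v)" using F(1) unfolding e .
  have "(\<integral>z. P v z \<partial>lborel) = (\<integral>a. 1 * (\<integral>z. Kn v z a * 1 \<partial>lborel) \<partial>M)"
    using F(2) unfolding e .
  also have "\<dots> = 1" using Kn_integral[OF v] by (simp add: prob_space)
  finally show "(\<integral>z. P v z \<partial>lborel) = 1" .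
qed

lemma Mn_int: assumes v: "0 < v" shows "integrable lborel (Mn v)" and "(\<integral>z. Mn v z \<partial>lborel) = (\<integral>a. a \<partial>M)"
proof -
  have gm: "(\<lambda>a. a::real) \<in> borel_measurable M" by simp
  have phim: "(\<lambda>_. 1::real) \<in> borel_measurable borel" by simp
  have phiC: "\<bar>(\<lambda>_. 1::real) z\<bar> \<le> 1" for z by simp
  note F = FubK[OF v gm bnd phim phiC]
  have e: "(\<lambda>z. (\<integral>a. a * Kn v z a \<partial>M) * 1) = Mn v" unfolding Mn_def by simp
  show "integrable lborel (Mn v)" using F(1) unfolding e .
  have "(\<integral>z. Mn v z \<partial>lborel) = (\<integral>a. a * (\<integral>z. Kn v z a * 1 \<partial>lborel) \<partial>M)"
    using F(2) unfolding e .
  also have "\<dots> = (\<integral>a. a \<partial>M)" using Kn_integral[OF v] by simp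
  finally show "(\<integral>z. Mn v z \<partial>lborel) = (\<integral>a. a \<partial>M)" .
qed

lemma q_int: assumes v: "0 < v" shows "integrable lborel (q v)"
proof (rule Bochner_Integration.integrable_bound[OF integrable_mult_right[OF P_int(1)[OF v], of "R\<^sup>2"]])
  show "AE z in lborel. norm (q v z) \<le> norm (R\<^sup>2 * P v z)"
    using q_le[OF v] q_nonneg[OF v] P_nonneg[OF v] by (auto intro!: AE_I2)
qed measurable

lemma Kn_bnd: "0 < w \<Longrightarrow> \<bar>Kn w y z\<bar> \<le> 1 / sqrt (2 * pi * w)"
  using Kn_le[of w y z] by (simp add: Kn_abs)

lemma conv_P: assumes v: "0 < v" and w: "0 < w"
  shows "integrable lborel (\<lambda>z. P v z * Kn w y z)" and "(\<integral>z. P v z * Kn w y z \<partial>lborel) = P (v + w) y"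
proof -
  have gm: "(\<lambda>_. 1::real) \<in> borel_measurable M" by simp
  have gB: "AE a in M. \<bar>(\<lambda>_. 1::real) a\<bar> \<le> 1" by simp
  have phim: "(\<lambda>z. Kn w y z) \<in> borel_measurable borel" by measurable
  note F = FubK[OF v gm gB phim Kn_bnd[OF w]]
  show "integrable lborel (\<lambda>z. P v z * Kn w y z)" using F(1) unfolding P_def by simp
  have "(\<integral>z. P v z * Kn w y z \<partial>lborel) = (\<integral>a. 1 * (\<integral>z. Kn v z a * Kn w y z \<partial>lborel) \<partial>M)"
    using F(2) unfolding P_def by simp
  also have "\<dots> = P (v + w) y" unfolding P_def using Kn_conv[OF v w] by simp
  finally show "(\<integral>z. P v z * Kn w y z \<partial>lborel) = P (v + w) y" .
qed

lemma conv_Mn: assumes v: "0 < v" and w: "0 < w"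
  shows "integrable lborel (\<lambda>z. Mn v z * Kn w y z)" and "(\<integral>z. Mn v z * Kn w y z \<partial>lborel) = Mn (v + w) y"
proof -
  have gm: "(\<lambda>a. a::real) \<in> borel_measurable M" by simp
  have phim: "(\<lambda>z. Kn w y z) \<in> borel_measurable borel" by measurable
  note F = FubK[OF v gm bnd phim Kn_bnd[OF w]]
  show "integrable lborel (\<lambda>z. Mn v z * Kn w y z)" using F(1) unfolding Mn_def by simp
  have "(\<integral>z. Mn v z * Kn w y z \<partial>lborel) = (\<integral>a. a * (\<integral>z. Kn v z a * Kn w y z \<partial>lborel) \<partial>M)"
    using F(2) unfolding Mn_def by simp
  also have "\<dots> = Mn (v + w) y" unfolding Mn_def using Kn_conv[OF v w] by simp
  finally show "(\<integral>z. Mn v z * Kn w y z \<partial>lborel) = Mn (v + w) y" .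
qed

lemma q_bnd: "0 < v \<Longrightarrow> \<bar>q v z\<bar> \<le> R\<^sup>2 * (1 / sqrt (2 * pi * v))"
proof -
  assume v: "0 < v"
  have "R\<^sup>2 * P v z \<le> R\<^sup>2 * (1 / sqrt (2 * pi * v))"
    by (rule mult_left_mono[OF P_le[OF v]]) simp
  then show ?thesis using q_le[OF v, of z] q_nonneg[OF v, of z] by (simp add: abs_of_nonneg)
qed

lemma intKz: assumes w: "0 < w" and f[measurable]: "f \<in> borel_measurable borel" and fB: "\<And>z. \<bar>f z\<bar> \<le> B"
  shows "integrable lborel (\<lambda>z. f z * Kn w y z)"
proof (rule Bochner_Integration.integrable_bound[OF integrable_mult_right[OF Kn_integrable[OF w], of B]])
  show "AE z in lborel. norm (f z * Kn w y z) \<le> norm (B * Kn w z y)"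
  proof (intro AE_I2)
    fix z
    have "\<bar>f z\<bar> * Kn w y z \<le> B * Kn w y z" by (rule mult_right_mono[OF fB Kn_nonneg[OF w]])
    moreover have "0 \<le> B" using fB[of z] by linarith
    ultimately show "norm (f z * Kn w y z) \<le> norm (B * Kn w z y)"
      by (simp add: abs_mult Kn_abs[OF w] Kn_sym[of w z y])
  qed
qed measurable

lemma Q_int: assumes v: "0 < v" and w: "0 < w"
  shows "integrable lborel (\<lambda>y. \<integral>z. q v z * Kn w y z \<partial>lborel)"
    and "(\<integral>y. (\<integral>z. q v z * Kn w y z \<partial>lborel) \<partial>lborel) = G v"
proof -
  have fm[measurable]: "(\<lambda>(z, y). q v z * Kn w y z) \<in> borel_measurable (lborel \<Otimes>\<^sub>M lborel)"
    by measurable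
  have int: "integrable (lborel \<Otimes>\<^sub>M lborel) (\<lambda>(z, y). q v z * Kn w y z)"
  proof (rule lborel_pair.Fubini_integrable)
    show "integrable lborel (\<lambda>z. \<integral>y. norm (case (z, y) of (z, y) \<Rightarrow> q v z * Kn w y z) \<partial>lborel)"
    proof -
      have "(\<integral>y. norm (q v z * Kn w y z) \<partial>lborel) = q v z" for z
        using Kn_integral[OF w, of z] q_nonneg[OF v, of z]
        by (simp add: abs_mult Kn_abs[OF w] abs_of_nonneg)
      then show ?thesis using q_int[OF v] by simp
    qed
    show "AE z in lborel. integrable lborel (\<lambda>y. case (z, y) of (z, y) \<Rightarrow> q v z * Kn w y z)"
      using Kn_integrable[OF w] by simp
  qed measurable
  show "integrable lborel (\<lambda>y. \<integral>z. q v z * Kn w y z \<partial>lborel)"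
    using lborel_pair.integrable_fst'[OF lborel_pair.integrable_product_swap[OF int]]
    by (simp add: case_prod_beta)
  have "(\<integral>y. (\<integral>z. q v z * Kn w y z \<partial>lborel) \<partial>lborel) = (\<integral>z. (\<integral>y. q v z * Kn w y z \<partial>lborel) \<partial>lborel)"
    using lborel_pair.Fubini_integral[of "\<lambda>z y. q v z * Kn w y z"] int by simp
  also have "\<dots> = (\<integral>z. q v z \<partial>lborel)"
    using Kn_integral[OF w] by simp
  finally show "(\<integral>y. (\<integral>z. q v z * Kn w y z \<partial>lborel) \<partial>lborel) = G v"
    by (simp add: G_def)
qed

lemma D_eq: fixes y :: real assumes v: "0 < v" and w: "0 < w"
  defines "c \<equiv> Mn (v + w) y / P (v + w) y"
  shows "integrable lborel (\<lambda>z. (Mn v z - c * P v z)\<^sup>2 / P v z * Kn w y z)"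
    and "(\<integral>z. (Mn v z - c * P v z)\<^sup>2 / P v z * Kn w y z \<partial>lborel)
          = (\<integral>z. q v z * Kn w y z \<partial>lborel) - q (v + w) y"
proof -
  have vw: "0 < v + w" using v w by simp
  have e: "(Mn v z - c * P v z)\<^sup>2 / P v z * Kn w y z
      = q v z * Kn w y z - 2 * c * (Mn v z * Kn w y z) + c\<^sup>2 * (P v z * Kn w y z)" for z
    using P_pos[OF v, of z] unfolding q_def by (simp add: field_simps power2_eq_square)
  have i1: "integrable lborel (\<lambda>z. q v z * Kn w y z)"
    by (rule intKz[OF w _ q_bnd[OF v]]) simp
  note i2 = conv_Mn(1)[OF v w, of y] and i3 = conv_P(1)[OF v w, of y]
  show "integrable lborel (\<lambda>z. (Mn v z - c * P v z)\<^sup>2 / P v z * Kn w y z)"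
    unfolding e using i1 i2 i3 by simp
  have "(\<integral>z. (Mn v z - c * P v z)\<^sup>2 / P v z * Kn w y z \<partial>lborel)
      = (\<integral>z. q v z * Kn w y z \<partial>lborel) - 2 * c * (\<integral>z. Mn v z * Kn w y z \<partial>lborel)
        + c\<^sup>2 * (\<integral>z. P v z * Kn w y z \<partial>lborel)"
    unfolding e using i1 i2 i3 by simp
  also have "\<dots> = (\<integral>z. q v z * Kn w y z \<partial>lborel) - 2 * c * Mn (v + w) y + c\<^sup>2 * P (v + w) y"
    using conv_Mn(2)[OF v w, of y] conv_P(2)[OF v w, of y] by simp
  also have "\<dots> = (\<integral>z. q v z * Kn w y z \<partial>lborel) - q (v + w) y"
    using P_pos[OF vw, of y] unfolding c_def q_def by (simp add: field_simps power2_eq_square)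
  finally show "(\<integral>z. (Mn v z - c * P v z)\<^sup>2 / P v z * Kn w y z \<partial>lborel)
          = (\<integral>z. q v z * Kn w y z \<partial>lborel) - q (v + w) y" .
qed

lemma Kn_exp: assumes v: "0 < v"
  shows "Kn v z a * exp (z\<^sup>2 / (2 * v)) = exp ((2 * a * z - a\<^sup>2) / (2 * v)) / sqrt (2 * pi * v)"
proof -
  have "-(z - a)\<^sup>2 / (2 * v) + z\<^sup>2 / (2 * v) = (2 * a * z - a\<^sup>2) / (2 * v)"
    using v by (simp add: field_simps power2_eq_square)
  then show ?thesis unfolding Kn_def by (simp add: exp_add[symmetric])
qed

lemma sep: assumes v: "0 < v" and z12: "z1 < z2" and m1: "Mn v z1 = 0" and m2: "Mn v z2 = 0"
  shows "AE a in M. a = 0"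
proof -
  define E1 where "E1 = exp (z1\<^sup>2 / (2 * v))"
  define E2 where "E2 = exp (z2\<^sup>2 / (2 * v))"
  define f where "f a = E2 * (a * Kn v z2 a) - E1 * (a * Kn v z1 a)" for a
  have fpos: "0 < f a" if "a \<noteq> 0" for a
  proof -
    have "f a = a * (Kn v z2 a * E2) - a * (Kn v z1 a * E1)"
      by (simp add: f_def algebra_simps)
    also have "\<dots> = a * (exp ((2 * a * z2 - a\<^sup>2) / (2 * v)) / sqrt (2 * pi * v))
        - a * (exp ((2 * a * z1 - a\<^sup>2) / (2 * v)) / sqrt (2 * pi * v))"
      unfolding E1_def E2_def using Kn_exp[OF v, of z2 a] Kn_exp[OF v, of z1 a] by simp
    also have "\<dots> = a * (exp ((2 * a * z2 - a\<^sup>2) / (2 * v)) - exp ((2 * a * z1 - a\<^sup>2) / (2 * v))) / sqrt (2 * pi * v)"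
      by (simp add: diff_divide_distrib right_diff_distrib)
    finally have "f a = a * (exp ((2 * a * z2 - a\<^sup>2) / (2 * v)) - exp ((2 * a * z1 - a\<^sup>2) / (2 * v))) / sqrt (2 * pi * v)" .
    moreover have "0 < a * (exp ((2 * a * z2 - a\<^sup>2) / (2 * v)) - exp ((2 * a * z1 - a\<^sup>2) / (2 * v)))"
    proof (cases "0 < a")
      case True
      then have "2 * a * z1 < 2 * a * z2" using z12 by simp
      then have "(2 * a * z1 - a\<^sup>2) / (2 * v) < (2 * a * z2 - a\<^sup>2) / (2 * v)"
        using v by (simp add: divide_strict_right_mono)
      then show ?thesis using True by simp
    next
      case False
      then have a: "a < 0" using that by simp
      then have "2 * a * z2 < 2 * a * z1" using z12 by simp
      then have "(2 * a * z2 - a\<^sup>2) / (2 * v) < (2 * a * z1 - a\<^sup>2) / (2 * v)"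
        using v by (simp add: divide_strict_right_mono)
      then show ?thesis using a by (simp add: mult_neg_neg)
    qed
    ultimately show ?thesis using v by simp
  qed
  have fnn: "0 \<le> f a" for a
    using fpos[of a] by (cases "a = 0") (auto simp: f_def)
  have fi: "integrable M f"
    unfolding f_def using intMa[OF v] by simp
  have "integral\<^sup>L M f = E2 * Mn v z2 - E1 * Mn v z1"
    unfolding f_def Mn_def using intMa[OF v] by simp
  then have "integral\<^sup>L M f = 0" using m1 m2 by simp
  then have "AE a in M. f a = 0"
    using integral_nonneg_eq_0_iff_AE[OF fi] fnn by simp
  then show ?thesis
    by eventually_elim (use fpos in fastforce)
qed

lemma M_eq: assumes "AE a in M. a = 0" shows "M = return borel 0"
proof (rule measure_eqI)
  show "sets M = sets (return borel 0)" unfolding sets_return by (rule sets_M)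
  fix A assume A: "A \<in> sets M"
  then have Ab: "A \<in> sets borel" unfolding sets_M .
  show "emeasure M A = emeasure (return borel 0) A"
  proof (cases "(0::real) \<in> A")
    case True
    have "AE a in M. a \<in> A" using assms by eventually_elim (use True in simp)
    then show ?thesis using emeasure_eq_1_AE[OF A] True Ab by simp
  next
    case False
    have ae: "AE a in M. a \<notin> A" using assms by eventually_elim (use False in simp)
    have eqA: "{x \<in> space M. \<not> x \<notin> A} = A" using sets.sets_into_space[OF A] by auto
    have "emeasure M A = 0" using AE_iff_measurable[OF A eqA] ae by simp
    then show ?thesis using False Ab by simp
  qed
qed

lemma G_strict: assumes v: "0 < v" and w: "0 < w" and mean: "(\<integral>a. a \<partial>M) = 0"
    and nz: "\<not> (AE a in M. a = 0)"
  shows "G (v + w) < G v"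
proof (rule ccontr)
  assume "\<not> G (v + w) < G v"
  then have le: "G v - G (v + w) \<le> 0" by simp
  have vw: "0 < v + w" using v w by simp
  define c where "c y = Mn (v + w) y / P (v + w) y" for y
  define d where "d y z = (Mn v z - c y * P v z)\<^sup>2 / P v z * Kn w y z" for y z
  define Q where "Q y = (\<integral>z. q v z * Kn w y z \<partial>lborel)" for y
  have dint: "integrable lborel (d y)" for y
    using D_eq(1)[OF v w, of y] unfolding d_def c_def by simp
  have deq: "(\<integral>z. d y z \<partial>lborel) = Q y - q (v + w) y" for y
    using D_eq(2)[OF v w, of y] unfolding d_def c_def Q_def by simp
  have dnn: "0 \<le> d y z" for y z
    unfolding d_def using P_pos[OF v, of z] Kn_nonneg[OF w, of y z] by simp
  have Qi: "integrable lborel Q" and QG: "(\<integral>y. Q y \<partial>lborel) = G v"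
    using Q_int[OF v w] unfolding Q_def by auto
  have Di: "integrable lborel (\<lambda>y. \<integral>z. d y z \<partial>lborel)"
    unfolding deq using Qi q_int[OF vw] by simp
  have "(\<integral>y. (\<integral>z. d y z \<partial>lborel) \<partial>lborel) = G v - G (v + w)"
    unfolding deq using Qi q_int[OF vw] QG by (simp add: G_def)
  moreover have "0 \<le> (\<integral>y. (\<integral>z. d y z \<partial>lborel) \<partial>lborel)"
    using dnn by (intro integral_nonneg_AE AE_I2 integral_nonneg_AE) auto
  ultimately have "(\<integral>y. (\<integral>z. d y z \<partial>lborel) \<partial>lborel) = 0" using le by simp
  then have "AE y in lborel. (\<integral>z. d y z \<partial>lborel) = 0"
    using integral_nonneg_eq_0_iff_AE[OF Di] dnn by (simp add: integral_nonneg_AE)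
  then obtain y where y: "(\<integral>z. d y z \<partial>lborel) = 0" using AE_lborel_ex by blast
  then have "AE z in lborel. d y z = 0"
    using integral_nonneg_eq_0_iff_AE[OF dint[of y]] dnn by simp
  then have ae1: "AE z in lborel. Mn v z = c y * P v z"
  proof eventually_elim
    case (elim z)
    then show ?case
      unfolding d_def using P_pos[OF v, of z] Kn_pos[OF w, of y z] by simp
  qed
  have "(\<integral>z. Mn v z \<partial>lborel) = (\<integral>z. c y * P v z \<partial>lborel)"
    by (rule integral_cong_AE) (use ae1 in simp_all)
  then have "0 = c y" using Mn_int(2)[OF v] mean P_int(2)[OF v] by simp
  then have ae2: "AE z in lborel. Mn v z = 0" using ae1 by simp
  then obtain z1 where z1: "Mn v z1 = 0" using AE_lborel_ex by blast
  have "AE z in lborel. Mn v z = 0 \<and> z \<noteq> z1"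
    using ae2 AE_lborel_singleton[of z1] by eventually_elim simp
  then obtain z2 where z2: "Mn v z2 = 0" "z2 \<noteq> z1" using AE_lborel_ex by blast
  show False
  proof (cases "z1 < z2")
    case True
    then show False using sep[OF v True z1 z2(1)] nz by simp
  next
    case False
    then have "z2 < z1" using z2(2) by simp
    then show False using sep[OF v _ z2(1) z1] nz by simp
  qed
qed

lemma gamma_G: assumes t: "0 < t"
  shows "(\<integral>x. ((\<integral>a. a * Zg a t x \<partial>M)\<^sup>2 / (\<integral>a. Zg a t x \<partial>M)) * std_normal_density x \<partial>lborel) = G (1 / t)"
proof -
  define F where "F x = ((\<integral>a. a * Zg a t x \<partial>M)\<^sup>2 / (\<integral>a. Zg a t x \<partial>M)) * std_normal_density x" for x
  define \<kappa> where "\<kappa> y = sqrt t * std_normal_density (sqrt t * y)" for y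
  have st: "sqrt t * sqrt t = t" using t by simp
  have K: "Kn (1 / t) y a = \<kappa> y * Zg a t (sqrt t * y)" for y a
  proof -
    have "Kn (1 / t) y a = sqrt t / sqrt (2 * pi) * exp (- (t * (y - a)\<^sup>2) / 2)"
      unfolding Kn_def using t by (simp add: real_sqrt_divide field_simps)
    moreover have "- (sqrt t * y)\<^sup>2 / 2 + (a * (sqrt t * (sqrt t * y)) - a\<^sup>2 * t / 2) = - (t * (y - a)\<^sup>2) / 2"
      using t by (simp add: power2_eq_square field_simps st)
    then have "\<kappa> y * Zg a t (sqrt t * y) = sqrt t / sqrt (2 * pi) * exp (- (t * (y - a)\<^sup>2) / 2)"
      unfolding \<kappa>_def Zg_def std_normal_density_def
      by (simp add: exp_add[symmetric])
    ultimately show ?thesis by simp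
  qed
  have kpos: "0 < \<kappa> y" for y unfolding \<kappa>_def using t by (simp add: normal_density_pos)
  have "(\<integral>x. F x \<partial>lborel) = \<bar>sqrt t\<bar> *\<^sub>R (\<integral>y. F (0 + sqrt t * y) \<partial>lborel)"
    using t by (intro lborel_integral_real_affine) simp
  also have "\<dots> = (\<integral>y. sqrt t * F (sqrt t * y) \<partial>lborel)"
    using t by simp
  also have "\<dots> = (\<integral>y. q (1 / t) y \<partial>lborel)"
  proof (rule Bochner_Integration.integral_cong[OF refl])
    fix y
    have m: "Mn (1 / t) y = \<kappa> y * (\<integral>a. a * Zg a t (sqrt t * y) \<partial>M)"
      unfolding Mn_def K mult.left_commute[of _ "\<kappa> y"] by (rule integral_mult_right_zero)
    have p: "P (1 / t) y = \<kappa> y * (\<integral>a. Zg a t (sqrt t * y) \<partial>M)"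
      unfolding P_def K by simp
    show "sqrt t * F (sqrt t * y) = q (1 / t) y"
      unfolding q_def m p F_def using kpos[of y] unfolding \<kappa>_def
      by (simp add: power2_eq_square field_simps)
  qed
  finally show ?thesis unfolding F_def G_def .
qed

end


theorem lemma5:
  fixes \<mu> :: "real measure" and \<Lambda> :: "real set" and p \<beta> \<beta>' s :: real
  assumes "p \<ge> 2"
    and "prob_space \<mu>" and "sets \<mu> = sets borel"
    and "\<Lambda> \<in> sets borel" and "bounded \<Lambda>" and "emeasure \<mu> \<Lambda> = 1"
    and "(\<integral>a. a \<partial>\<mu>) = 0"
    and "\<mu> \<noteq> return borel 0"
    and "0 < \<beta>" and "\<beta> < \<beta>'" and "0 < s"
  shows "gamma \<mu> p \<beta> s < gamma \<mu> p \<beta>' s"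
proof -
  interpret PS: prob_space \<mu> by (rule assms(2))
  obtain R where R: "\<forall>x\<in>\<Lambda>. \<bar>x\<bar> \<le> R" using assms(5) unfolding bounded_real by blast
  have L: "\<Lambda> \<in> PS.events" using assms(3,4) by simp
  have "PS.prob \<Lambda> = 1" using assms(6) PS.emeasure_eq_measure[of \<Lambda>] by simp
  then have "AE a in \<mu>. a \<in> \<Lambda>" by (rule PS.AE_prob_1)
  then have bnd: "AE a in \<mu>. \<bar>a\<bar> \<le> R" by eventually_elim (use R in auto)
  interpret L: Lset \<mu> R
    by unfold_locales (use assms(3) bnd in auto)
  have xi: "0 < xi' p s" unfolding xi'_def using assms(1,11) by simp
  define t where "t = \<beta> * xi' p s"
  define t' where "t' = \<beta>' * xi' p s"
  have t: "0 < t" unfolding t_def using xi assms(9) by simp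
  have tt: "t < t'" unfolding t_def t'_def using xi assms(10) by simp
  have t': "0 < t'" using t tt by simp
  have g1: "gamma \<mu> p \<beta> s = L.G (1 / t)"
    unfolding gamma_def Let_def t_def[symmetric] using L.gamma_G[OF t] by simp
  have g2: "gamma \<mu> p \<beta>' s = L.G (1 / t')"
    unfolding gamma_def Let_def t'_def[symmetric] using L.gamma_G[OF t'] by simp
  have nz: "\<not> (AE a in \<mu>. a = 0)" using L.M_eq assms(8) by blast
  have v: "0 < 1 / t'" using t' by simp
  have w: "0 < 1 / t - 1 / t'" using t tt by (simp add: frac_less2)
  have "L.G (1 / t' + (1 / t - 1 / t')) < L.G (1 / t')"
    by (rule L.G_strict[OF v w assms(7) nz])
  then show ?thesis using g1 g2 by simp
qed

end
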